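(* For $q>-1$ and $x,y>0$ let $H(q,x,y)=\frac{1}{1+q}\int_{-1}^q\frac{(1+s)^2}{s^2}(1-e^{-sx})(1-e^{-sy})\,ds$, and for $X,Y>0$ let $$\tilde H(q,X,Y)=\frac{e^{-(X+Y)/(1+q)}}{(1+q)^2}\,H\Big(q,\frac{X}{1+q},\frac{Y}{1+q}\Big).$$ Then, for every sequence $q_n\to-1$ (with $q_n>-1$), $$\tilde H(q_n,X,Y)\to\frac{1}{(X+Y)^3}\int_0^{X+Y}\xi^2e^{-\xi}\,d\xi$$ locally uniformly in $(X,Y)\in(0,\infty)^2$. *)

theory Defs
  imports "HOL-Analysis.Analysis"
begin

text \<open>H(q,x,y) = 1/(1+q) * integral over [-1,q] of (1+s)^2/s^2 (1-e^(-sx))(1-e^(-sy)) ds.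
  The integrand has a removable singularity at s = 0 (a single point, irrelevant for the integral).\<close>
definition H :: "real \<Rightarrow> real \<Rightarrow> real \<Rightarrow> real" where
  "H q x y = (1 / (1 + q)) *
     integral {-1..q} (\<lambda>s. (1 + s)^2 / s^2 * (1 - exp (- s * x)) * (1 - exp (- s * y)))"

definition Htilde :: "real \<Rightarrow> real \<Rightarrow> real \<Rightarrow> real" where
  "Htilde q X Y = exp (- (X + Y) / (1 + q)) / (1 + q)^2 * H q (X / (1 + q)) (Y / (1 + q))"

definition Hlim :: "real \<Rightarrow> real \<Rightarrow> real" where
  "Hlim X Y = 1 / (X + Y)^3 * integral {0..X + Y} (\<lambda>\<xi>. \<xi>^2 * exp (- \<xi>))"

end

theory Submission
  imports Defs
begin

lemma affine_sub:
  fixes f :: "real \<Rightarrow> real"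
  assumes "f integrable_on {a..b}" "a \<le> b" "m > 0"
  shows "integral {(a-c)/m..(b-c)/m} (\<lambda>t. f (m*t + c)) = integral {a..b} f / m"
proof -
  have "(f has_integral integral {a..b} f) (cbox a b)" using assms(1) by (simp add: integrable_integral)
  from has_integral_affinity[OF this, of m c] assms(3)
  have "((\<lambda>x. f (m * x + c)) has_integral (1 / m) * integral {a..b} f) ((\<lambda>x. (1 / m) * x + - ((1 / m) * c)) ` {a..b})"
    by simp
  moreover have "(\<lambda>x. (1 / m) * x + - ((1 / m) * c)) ` {a..b} = {(a-c)/m..(b-c)/m}"
    using assms(2,3) by (subst image_affinity_atLeastAtMost) (auto simp: field_simps)
  ultimately show ?thesis by (simp add: integral_unique)
qed

lemma bound:
  fixes t e X Y m :: real
  assumes "0 \<le> t" "t \<le> 1" "0 < e" "e \<le> 1/2" "m > 0" "X \<ge> m" "Y \<ge> m"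
  shows "\<bar>t^2/(e*t-1)^2 * ((exp(-X/e) - exp(-t*X))*(exp(-Y/e)-exp(-t*Y))) - t^2 * exp(-t*(X+Y))\<bar> \<le> 8*e + 2*e/m"
proof -
  define a where "a = exp(-t*X)"
  define b where "b = exp(-t*Y)"
  define da where "da = exp(-X/e)"
  define db where "db = exp(-Y/e)"
  define u where "u = 1/(e*t-1)^2"
  have ab: "exp(-t*(X+Y)) = a*b" unfolding a_def b_def by (simp add: exp_add[symmetric] algebra_simps)
  have X0: "X > 0" "Y > 0" using assms by auto
  have "2 \<le> 1/e" using assms by (simp add: field_simps)
  hence tle: "t \<le> 1/e" using assms by linarith
  have "t*X \<le> X/e" using mult_right_mono[OF tle, of X] X0 by simp
  hence daa: "da \<le> a" unfolding a_def da_def by simp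
  have "t*Y \<le> Y/e" using mult_right_mono[OF tle, of Y] X0 by simp
  hence dbb: "db \<le> b" unfolding b_def db_def by simp
  have a1: "a \<le> 1" "b \<le> 1" unfolding a_def b_def using assms X0 by auto
  have pos: "da > 0" "db > 0" unfolding da_def db_def by auto
  have "1 + X/e \<le> exp (X/e)" by simp
  hence "X/e \<le> exp (X/e)" by linarith
  hence "da \<le> e/X" unfolding da_def using X0 assms(3) by (simp add: exp_minus field_simps)
  also have "e/X \<le> e/m" using assms X0 by (simp add: frac_le)
  finally have da: "da \<le> e/m" .
  have "1 + Y/e \<le> exp (Y/e)" by simp
  hence "Y/e \<le> exp (Y/e)" by linarith
  hence "db \<le> e/Y" unfolding db_def using X0 assms(3) by (simp add: exp_minus field_simps)
  also have "e/Y \<le> e/m" using assms X0 by (simp add: frac_le)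
  finally have db: "db \<le> e/m" .
  have P: "(da - a)*(db - b) = (a-da)*(b-db)" by (simp add: algebra_simps)
  have P0: "0 \<le> (a-da)*(b-db)"
    using daa dbb a1 pos by (auto intro: mult_nonneg_nonneg)
  have "(a-da)*(b-db) \<le> 1*1" using daa dbb a1 pos by (intro mult_mono) auto
  hence P1: "(a-da)*(b-db) \<le> 1" by simp
  have Pab: "\<bar>(a-da)*(b-db) - a*b\<bar> \<le> da + db"
  proof -
    have "(a-da)*(b-db) - a*b = da*db - a*db - da*b" by (simp add: algebra_simps)
    moreover have "da*db \<le> a*db" using daa pos by simp
    moreover have "a*db \<le> db" "da*b \<le> da" using a1 pos by (simp_all add: mult_left_le mult_left_le_one_le)
    moreover have "0 \<le> da*b" "0 \<le> a*db" using pos daa dbb by simp_all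
    moreover have "0 \<le> da*db" using pos by simp
    ultimately show ?thesis unfolding abs_le_iff by linarith
  qed
  have "e*t \<le> e*1" using assms by (intro mult_left_mono) auto
  hence et2: "e*t \<le> 1/2" using assms(4) by linarith
  have et: "0 \<le> e*t" "e*t \<le> 1/2" using assms et2 by simp_all
  define w where "w = (1 - e*t)^2"
  have uw: "u = 1/w" unfolding u_def w_def by (simp add: power2_eq_square algebra_simps)
  have w4: "w \<ge> 1/4"
  proof -
    have "(1/2)^2 \<le> (1 - e*t)^2" using et by (intro power_mono) auto
    thus ?thesis unfolding w_def by (simp add: power2_eq_square)
  qed
  have wle: "w \<le> 1" unfolding w_def using et by (intro power_le_one) auto
  have u1: "1 \<le> u" unfolding uw using wle w4 by (simp add: le_divide_eq_1)
  have w1: "1 - w \<le> 2*e"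
  proof -
    have "1 - w = e*t*(2 - e*t)" unfolding w_def by (simp add: power2_eq_square algebra_simps)
    also have "\<dots> \<le> e*t*2" using et by (simp add: mult_left_mono)
    also have "\<dots> \<le> e*2" using assms by simp
    finally show ?thesis by simp
  qed
  have u2: "u - 1 \<le> 8*e"
  proof -
    have "u - 1 = (1 - w)*(1/w)" using uw w4 by (simp add: field_simps)
    also have "\<dots> \<le> (1-w)*4" using w4 wle by (intro mult_left_mono) (auto simp: field_simps)
    finally have "u - 1 \<le> 4 - 4*w" by (simp add: algebra_simps)
    thus ?thesis using w1 by linarith
  qed
  have ab': "exp(-t*(X+Y)) = exp(-t*X)*exp(-t*Y)" by (simp add: exp_add[symmetric] algebra_simps)
  have eq0: "t^2/(e*t-1)^2 * ((exp(-X/e) - exp(-t*X))*(exp(-Y/e)-exp(-t*Y))) - t^2 * exp(-t*(X+Y))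
     = t^2*u*((da-a)*(db-b)) - t^2*(a*b)"
    unfolding ab' by (simp add: a_def b_def da_def db_def u_def)
  have eq1: "t^2*u*((da-a)*(db-b)) - t^2*(a*b) = t^2 * ((u-1)*((a-da)*(b-db)) + ((a-da)*(b-db) - a*b))"
    by (simp add: P algebra_simps)
  note eq = eq0 eq1
  have t2: "0 \<le> t^2" "t^2 \<le> 1" using assms by (auto simp: power_le_one)
  have "\<bar>(u-1)*((a-da)*(b-db)) + ((a-da)*(b-db) - a*b)\<bar> \<le> 8*e + 2*e/m"
  proof -
    have "(u-1)*((a-da)*(b-db)) \<le> (u-1)*1" using u1 P1 by (intro mult_left_mono) auto
    moreover have "0 \<le> (u-1)*((a-da)*(b-db))" using u1 P0 by simp
    ultimately have "\<bar>(u-1)*((a-da)*(b-db))\<bar> \<le> 8*e" using u2 by simp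
    thus ?thesis using Pab da db by linarith
  qed
  hence "\<bar>t^2 * ((u-1)*((a-da)*(b-db)) + ((a-da)*(b-db) - a*b))\<bar> \<le> 8*e + 2*e/m"
    using t2 mult_left_le_one_le[of "\<bar>(u-1)*((a-da)*(b-db)) + ((a-da)*(b-db) - a*b)\<bar>" "t^2"]
    by (simp add: abs_mult)
  thus ?thesis using eq by simp
qed


definition G :: "real \<Rightarrow> real \<Rightarrow> real \<Rightarrow> real \<Rightarrow> real" where
  "G e X Y t = t^2/(e*t-1)^2 * ((exp(-X/e) - exp(-t*X))*(exp(-Y/e)-exp(-t*Y)))"

definition G0 :: "real \<Rightarrow> real \<Rightarrow> real \<Rightarrow> real" where
  "G0 X Y t = t^2 * exp(-t*(X+Y))"

lemma G_integrable:
  assumes "0 < e" "e \<le> 1/2"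
  shows "G e X Y integrable_on {0..1}"
proof -
  have "\<forall>t\<in>{0..1}. (e*t-1)^2 \<noteq> 0"
  proof
    fix t :: real assume "t \<in> {0..1}"
    hence "e*t \<le> e*1" using assms by (intro mult_left_mono) auto
    hence "e*t \<noteq> 1" using assms by linarith
    thus "(e*t-1)^2 \<noteq> 0" by simp
  qed
  hence "continuous_on {0..1} (G e X Y)" unfolding G_def
    by (intro continuous_intros) auto
  thus ?thesis by (rule integrable_continuous_real)
qed

lemma G0_integrable: "G0 X Y integrable_on {0..1}"
  unfolding G0_def by (intro integrable_continuous_real continuous_intros)

lemma exp_aux:
  fixes X e t :: real
  assumes "e > 0"
  shows "exp(-X/e)*(1-exp(-(e*t-1)*(X/e))) = exp(-X/e) - exp(-t*X)"
proof -
  have "exp(-X/e)*exp(-(e*t-1)*(X/e)) = exp(-X/e + -(e*t-1)*(X/e))" using exp_add[of "-X/e" "-(e*t-1)*(X/e)"] by simp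
  also have "-X/e + -(e*t-1)*(X/e) = -t*X" using assms by (simp add: field_simps)
  finally show ?thesis by (simp add: algebra_simps)
qed

lemma rearr: "(aa::real) * bb / kk * (pp / rr * uu * vv) = (pp / kk) / rr * ((aa * uu) * (bb * vv))"
  by (simp add: divide_inverse mult_ac)

lemma Htilde_eq:
  assumes "-1 < q" "q \<le> -1/2"
  shows "Htilde q X Y = integral {0..1} (G (1+q) X Y)"
proof -
  define e where "e = 1 + q"
  have e: "0 < e" "e \<le> 1/2" using assms unfolding e_def by auto
  define f where "f = (\<lambda>s. (1 + s)^2 / s^2 * (1 - exp (- s * (X/e))) * (1 - exp (- s * (Y/e))))"
  have "continuous_on {-1..q} f" unfolding f_def using assms
    by (intro continuous_intros) auto
  hence fi: "f integrable_on {-1..q}" by (rule integrable_continuous_real)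
  have "integral {(-1-(-1))/e..(q-(-1))/e} (\<lambda>t. f (e*t + -1)) = integral {-1..q} f / e"
    by (rule affine_sub[OF fi]) (use assms e in auto)
  moreover have "(q-(-1))/e = 1" using e unfolding e_def by simp
  ultimately have I: "integral {0..1} (\<lambda>t. f (e*t - 1)) = integral {-1..q} f / e" by simp
  have H: "H q (X/e) (Y/e) = integral {0..1} (\<lambda>t. f (e*t - 1))"
  proof -
    have "H q (X/e) (Y/e) = integral {-1..q} f / e" unfolding H_def f_def e_def[symmetric] by simp
    thus ?thesis using I by simp
  qed
  have "Htilde q X Y = exp (- (X + Y) / e) / e^2 * integral {0..1} (\<lambda>t. f (e*t - 1))"
    unfolding Htilde_def e_def[symmetric] H ..
  also have "\<dots> = integral {0..1} (\<lambda>t. exp (- (X + Y) / e) / e^2 * f (e*t - 1))" by simp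
  also have "\<dots> = integral {0..1} (G e X Y)"
  proof (rule integral_cong)
    fix t :: real
    have ex: "exp (- (X + Y) / e) = exp(-X/e) * exp(-Y/e)" by (simp add: exp_add[symmetric] diff_divide_distrib add_divide_distrib)
    have sq: "(1 + (e*t-1))^2 / e^2 = t^2" using e by (simp add: power_mult_distrib)
    have "exp (- (X + Y) / e) / e^2 * f (e*t - 1)
       = ((1 + (e*t-1))^2 / e^2) / (e*t-1)^2 * ((exp(-X/e)*(1-exp(-(e*t-1)*(X/e)))) * (exp(-Y/e)*(1-exp(-(e*t-1)*(Y/e)))))"
      unfolding f_def ex by (rule rearr)
    also have "\<dots> = G e X Y t" unfolding sq exp_aux[OF e(1)] G_def by simp
    finally show "exp (- (X + Y) / e) / e^2 * f (e*t - 1) = G e X Y t" .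
  qed
  finally show ?thesis unfolding e_def .
qed

lemma Hlim_eq:
  assumes "X + Y > 0"
  shows "Hlim X Y = integral {0..1} (G0 X Y)"
proof -
  define Z where "Z = X + Y"
  have Z: "Z > 0" using assms Z_def by simp
  define g where "g = (\<lambda>\<xi>::real. \<xi>^2 * exp (- \<xi>))"
  have gi: "g integrable_on {0..Z}" unfolding g_def by (intro integrable_continuous_real continuous_intros)
  have "integral {(0-0)/Z..(Z-0)/Z} (\<lambda>t. g (Z*t + 0)) = integral {0..Z} g / Z"
    by (rule affine_sub[OF gi]) (use Z in auto)
  hence I: "integral {0..1} (\<lambda>t. g (Z*t)) = integral {0..Z} g / Z" using Z by simp
  have "integral {0..1} (G0 X Y) = integral {0..1} (\<lambda>t. g (Z*t) / Z^2)"
    by (rule integral_cong) (use Z in \<open>simp add: G0_def g_def Z_def power_mult_distrib mult.commute\<close>)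
  also have "\<dots> = integral {0..Z} g / Z^3" using I Z by (simp add: power3_eq_cube power2_eq_square)
  finally show ?thesis unfolding Hlim_def g_def Z_def by (simp add: divide_inverse mult.commute)
qed


theorem lemma3p10:
  fixes q :: "nat \<Rightarrow> real"
  assumes "\<And>n. q n > -1"
    and "q \<longlonglongrightarrow> -1"
  shows "\<And>K. compact K \<Longrightarrow> K \<subseteq> {p :: real \<times> real. fst p > 0 \<and> snd p > 0} \<Longrightarrow>
           uniform_limit K (\<lambda>n p. Htilde (q n) (fst p) (snd p)) (\<lambda>p. Hlim (fst p) (snd p)) sequentially"
proof -
  fix K :: "(real \<times> real) set"
  assume cK: "compact K" and sK: "K \<subseteq> {p :: real \<times> real. fst p > 0 \<and> snd p > 0}"
  obtain m where m: "m > 0" "\<And>p. p \<in> K \<Longrightarrow> m \<le> fst p \<and> m \<le> snd p"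
  proof (cases "K = {}")
    case True thus ?thesis using that[of 1] by auto
  next
    case False
    have "continuous_on K (\<lambda>p. min (fst p) (snd p))" by (intro continuous_intros)
    from continuous_attains_inf[OF cK False this] obtain p0 where
      p0: "p0 \<in> K" "\<And>p. p \<in> K \<Longrightarrow> min (fst p0) (snd p0) \<le> min (fst p) (snd p)" by auto
    have "min (fst p0) (snd p0) > 0" using p0(1) sK by auto
    thus ?thesis using that[of "min (fst p0) (snd p0)"] p0(2) by force
  qed
  define C where "C = 8 + 2/m"
  have "2/m > 0" using m(1) by simp
  hence C: "C > 0" unfolding C_def by linarith
  show "uniform_limit K (\<lambda>n p. Htilde (q n) (fst p) (snd p)) (\<lambda>p. Hlim (fst p) (snd p)) sequentially"
    unfolding uniform_limit_iff
  proof (intro allI impI)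
    fix d :: real assume d: "d > 0"
    define \<delta> where "\<delta> = min (1/2) (d / C)"
    have \<delta>: "\<delta> > 0" unfolding \<delta>_def using d C by simp
    have "\<forall>\<^sub>F n in sequentially. q n < -1 + \<delta>"
      using order_tendstoD(2)[OF assms(2), of "-1 + \<delta>"] \<delta> by simp
    thus "\<forall>\<^sub>F n in sequentially. \<forall>p\<in>K. dist (Htilde (q n) (fst p) (snd p)) (Hlim (fst p) (snd p)) < d"
    proof eventually_elim
      case (elim n)
      define e where "e = 1 + q n"
      have e: "0 < e" "e < \<delta>" using elim assms(1)[of n] unfolding e_def by auto
      have e2: "e \<le> 1/2" using e unfolding \<delta>_def by simp
      have eC: "e * C < d"
      proof -
        have "e * C < \<delta> * C" using e C by simp
        also have "\<dots> \<le> (d/C) * C" unfolding \<delta>_def using C by (intro mult_right_mono) auto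
        finally show ?thesis using C by simp
      qed
      show "\<forall>p\<in>K. dist (Htilde (q n) (fst p) (snd p)) (Hlim (fst p) (snd p)) < d"
      proof
        fix p assume pK: "p \<in> K"
        define X where "X = fst p"
        define Y where "Y = snd p"
        have XY: "m \<le> X" "m \<le> Y" using m(2)[OF pK] unfolding X_def Y_def by auto
        have "Htilde (q n) X Y = integral {0..1} (G e X Y)"
          unfolding e_def by (rule Htilde_eq) (use e e2 assms(1)[of n] in \<open>auto simp: e_def\<close>)
        moreover have "Hlim X Y = integral {0..1} (G0 X Y)" by (rule Hlim_eq) (use XY m in auto)
        ultimately have "Htilde (q n) X Y - Hlim X Y = integral {0..1} (\<lambda>t. G e X Y t - G0 X Y t)"
          using integral_diff[OF G_integrable[OF e(1) e2] G0_integrable] by simp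
        moreover have hi: "((\<lambda>t. G e X Y t - G0 X Y t) has_integral integral {0..1} (\<lambda>t. G e X Y t - G0 X Y t)) {0..1}"
          using integrable_diff[OF G_integrable[OF e(1) e2] G0_integrable] by (simp add: integrable_integral)
        have "norm (integral {0..1} (\<lambda>t. G e X Y t - G0 X Y t)) \<le> e * C * measure lborel {0..1::real}"
        proof (rule has_integral_bound_real[where S="{}", OF _ _ hi])
          show "0 \<le> e * C" using e C by simp
          show "finite ({}::real set)" by simp
          fix t assume "t \<in> {0..1::real} - {}"
          hence "\<bar>G e X Y t - G0 X Y t\<bar> \<le> 8*e + 2*e/m"
            unfolding G_def G0_def using e e2 m XY by (intro bound) auto
          thus "norm (G e X Y t - G0 X Y t) \<le> e * C" unfolding C_def by (simp add: algebra_simps)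
        qed
        ultimately have "\<bar>Htilde (q n) X Y - Hlim X Y\<bar> < d" using eC by simp
        thus "dist (Htilde (q n) (fst p) (snd p)) (Hlim (fst p) (snd p)) < d"
          unfolding X_def Y_def dist_real_def .
      qed
    qed
  qed
qed

end
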